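(* Let $(f,g),(f',g')\in\Theta$, where the unembedding matrix $L=(g(y_1)\cdots g(y_k))\in\mathbb R^{m\times k}$ has rank $m$, and let $h:\mathcal X\to\Delta^{C-1}$, $C\ge2$, be a concept that is linearly encoded in $f$ with weight matrix $W\in\mathbb R^{m\times C}$ and bias $b\in\mathbb R^C$. Let $A\in\mathbb R^{k\times C}$ be any matrix with $W=LA$. Then $$\inf_{W'\in\mathbb R^{m'\times C},\,b'\in\mathbb R^C}\ \mathbb E_{x\sim p_x}\Big[\mathrm{KL}\big(p_h(\cdot\mid x)\,\big\|\,\mathrm{softmax}(W'^\top f'(x)+b')\big)\Big]\ \le\ \frac12\|A\|_{\mathrm{op}}^2\,d_{\mathrm{logit}}^2(p_{f,g},p_{f',g'}),$$ where $m'$ is the representation dimension of $f'$ and $\|\cdot\|_{\mathrm{op}}$ is the operator norm.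
   Context: Model class $\Theta$: pairs $(f,g)$, $f:\mathcal X\to\mathbb R^m$, $g:\mathcal Y\to\mathbb R^m$, $\mathcal Y=\{y_1,\dots,y_k\}$, $\sum_y g(y)=0$, inducing $p_{f,g}(y\mid x)\propto\exp(f(x)^\top g(y))$; $p_x$ is the data distribution. Logits $u(x)=L^\top f(x)$, $u'(x)=L'^\top f'(x)$; $d_{\mathrm{logit}}^2=\mathbb E_{x\sim p_x}\|u(x)-u'(x)\|_2^2$. A categorical concept is a map $h:\mathcal X\to\Delta^{C-1}$ (simplex over $C$ values) defining $p_h(c\mid x)=h(x)_c$. It is linearly encoded in $f$ if there exist $w_c\in\mathbb R^m$, $b_c\in\mathbb R$ ($c=1,\dots,C$) with $\exp(w_c^\top f(x)+b_c)/\sum_{j=1}^C\exp(w_j^\top f(x)+b_j)=p_h(c\mid x)$ for all $c$ and $x$; $W$ is the matrix with columns $w_c$ and $b=(b_c)_c$. *)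

theory Defs
  imports "HOL-Analysis.Analysis" "HOL-Probability.Probability"
begin

definition in_Theta :: "('x \<Rightarrow> real^'m) \<Rightarrow> ('y::finite \<Rightarrow> real^'m) \<Rightarrow> bool" where
  "in_Theta f g \<longleftrightarrow> (\<Sum>y\<in>UNIV. g y) = 0"

text \<open>Unembedding matrix L = (g(y_1) ... g(y_k)), an m x k matrix with columns g(y).\<close>
definition unembed :: "('y::finite \<Rightarrow> real^'m) \<Rightarrow> real^'y^'m" where
  "unembed g = (\<chi> i y. g y $ i)"

definition logits :: "('x \<Rightarrow> real^'m) \<Rightarrow> ('y::finite \<Rightarrow> real^'m) \<Rightarrow> 'x \<Rightarrow> real^'y" where
  "logits f g x = transpose (unembed g) *v f x"

definition dlogit2 :: "'x measure \<Rightarrow> ('x \<Rightarrow> real^'m) \<Rightarrow> ('y::finite \<Rightarrow> real^'m)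
    \<Rightarrow> ('x \<Rightarrow> real^'m2) \<Rightarrow> ('y \<Rightarrow> real^'m2) \<Rightarrow> ennreal" where
  "dlogit2 px f g f' g' = (\<integral>\<^sup>+ x. ennreal ((norm (logits f g x - logits f' g' x))\<^sup>2) \<partial>px)"

definition softmax :: "real^'c::finite \<Rightarrow> real^'c" where
  "softmax z = (\<chi> c. exp (z $ c) / (\<Sum>j\<in>UNIV. exp (z $ j)))"

definition prob_simplex :: "(real^'c::finite) set" where
  "prob_simplex = {p. (\<forall>c. 0 \<le> p $ c) \<and> (\<Sum>c\<in>UNIV. p $ c) = 1}"

definition KL :: "real^'c::finite \<Rightarrow> real^'c \<Rightarrow> real" where
  "KL p q = (\<Sum>c\<in>UNIV. if p $ c = 0 then 0 else p $ c * ln (p $ c / q $ c))"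

definition lin_encoded :: "('x \<Rightarrow> real^'c::finite) \<Rightarrow> ('x \<Rightarrow> real^'m) \<Rightarrow> real^'c^'m \<Rightarrow> real^'c \<Rightarrow> bool" where
  "lin_encoded h f W b \<longleftrightarrow>
     (\<forall>x c. exp ((transpose W *v f x) $ c + b $ c) / (\<Sum>j\<in>UNIV. exp ((transpose W *v f x) $ j + b $ j)) = h x $ c)"

end

theory Submission
  imports Defs
begin

lemma lse_bound:
  fixes p d :: "real^'c::finite"
  assumes p0: "\<forall>c. 0 \<le> p $ c" and p1: "(\<Sum>c\<in>UNIV. p $ c) = 1"
  shows "ln (\<Sum>c\<in>UNIV. p $ c * exp (d $ c)) - (\<Sum>c\<in>UNIV. p $ c * d $ c) \<le> (norm d)\<^sup>2 / 2"
proof (cases "norm d = 0")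
  case True
  then have "d = 0" by simp
  then show ?thesis using p1 by simp
next
  case False
  define a where "a = - norm d"
  define bb where "bb = norm d"
  define hh where "hh = bb - a"
  have hpos: "hh > 0" using False unfolding hh_def a_def bb_def
    by (metis add_pos_pos diff_minus_eq_add norm_ge_zero order_le_less)
  define t where "t = (\<lambda>c. (d $ c - a) / hh)"
  have dab: "a \<le> d $ c \<and> d $ c \<le> bb" for c
    using component_le_norm_cart[of d c] unfolding a_def bb_def by (auto simp: abs_le_iff)
  have t01: "0 \<le> t c \<and> t c \<le> 1" for c
    using dab[of c] hpos unfolding t_def hh_def by (auto simp: field_simps)
  have dt: "d $ c = (1 - t c) * a + t c * bb" for c
  proof -
    have "t c * hh = d $ c - a" using hpos unfolding t_def by simp
    then show ?thesis unfolding hh_def by (simp add: algebra_simps)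
  qed
  have ex: "exp (d $ c) \<le> (1 - t c) * exp a + t c * exp bb" for c
  proof -
    have "exp ((1 - t c) * a + t c * bb) \<le> (1 - t c) * exp a + t c * exp bb"
      using convex_onD[OF exp_convex, of "t c" a bb] t01[of c] by simp
    then show ?thesis using dt[of c] by simp
  qed
  define P where "P = (\<Sum>c\<in>UNIV. p $ c * t c)"
  have P0: "0 \<le> P" unfolding P_def using p0 t01 by (intro sum_nonneg) auto
  have mu: "(\<Sum>c\<in>UNIV. p $ c * d $ c) = a + P * hh"
  proof -
    have "(\<Sum>c\<in>UNIV. p $ c * d $ c) = (\<Sum>c\<in>UNIV. p $ c * a + (p $ c * t c) * hh)"
      by (intro sum.cong refl) (simp add: t_def field_simps hpos[THEN less_imp_neq, symmetric])
    also have "\<dots> = a + P * hh"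
      by (simp add: sum.distrib P_def sum_distrib_right[symmetric] sum_distrib_left[symmetric] p1
          mult.commute)
    finally show ?thesis .
  qed
  define S where "S = (\<Sum>c\<in>UNIV. p $ c * exp (d $ c))"
  have S_le: "S \<le> exp a * (1 + P * (exp hh - 1))"
  proof -
    have "S \<le> (\<Sum>c\<in>UNIV. p $ c * ((1 - t c) * exp a + t c * exp bb))"
      unfolding S_def using p0 ex by (intro sum_mono mult_left_mono) auto
    also have "\<dots> = (\<Sum>c\<in>UNIV. p $ c * exp a + (p $ c * t c) * (exp bb - exp a))"
      by (intro sum.cong refl) (simp add: field_simps)
    also have "\<dots> = exp a + P * (exp bb - exp a)"
      by (simp add: sum.distrib P_def sum_distrib_right[symmetric] p1)
    also have "exp bb = exp a * exp hh" unfolding hh_def by (simp add: exp_diff)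
    finally show ?thesis by (simp add: field_simps)
  qed
  have Spos: "S > 0"
  proof -
    have "\<exists>c. p $ c \<noteq> 0" using p1 by (metis (no_types, lifting) sum.neutral zero_neq_one)
    then obtain c where "p $ c > 0" using p0 by (metis order_le_less)
    then have "0 < p $ c * exp (d $ c)" by simp
    also have "\<dots> \<le> S" unfolding S_def
      by (rule member_le_sum) (use p0 in auto)
    finally show ?thesis .
  qed
  have Q: "1 + P * (exp hh - 1) > 0" using P0 hpos by (simp add: add_pos_nonneg)
  have "ln S \<le> ln (exp a * (1 + P * (exp hh - 1)))"
    using S_le Spos by (subst ln_le_cancel_iff) auto
  also have "\<dots> = a + ln (1 + P * (exp hh - 1))" using Q by (simp add: ln_mult)
  finally have "ln S - (a + P * hh) \<le> - hh * P + ln (1 + P * (exp hh - 1))" by simp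
  also have "\<dots> \<le> hh\<^sup>2 / 8" using Hoeffdings_lemma_aux[of hh P] hpos P0 by simp
  also have "hh\<^sup>2 / 8 = (norm d)\<^sup>2 / 2" unfolding hh_def a_def bb_def by (simp add: power2_eq_square)
  finally show ?thesis unfolding S_def mu .
qed

lemma kl_softmax:
  fixes z z' :: "real^'c::finite"
  shows "KL (softmax z) (softmax z') \<le> (norm (z' - z))\<^sup>2 / 2"
proof -
  define Z where "Z = (\<Sum>j\<in>UNIV. exp (z $ j))"
  define Z' where "Z' = (\<Sum>j\<in>UNIV. exp (z' $ j))"
  have Zp: "Z > 0" unfolding Z_def by (intro sum_pos) auto
  have Zp': "Z' > 0" unfolding Z'_def by (intro sum_pos) auto
  define p where "p = softmax z"
  define d where "d = z' - z"
  have pc: "p $ c = exp (z $ c) / Z" for c unfolding p_def softmax_def Z_def by simp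
  have qc: "softmax z' $ c = exp (z' $ c) / Z'" for c unfolding softmax_def Z'_def by simp
  have p0: "\<forall>c. 0 \<le> p $ c" using Zp by (simp add: pc)
  have p1: "(\<Sum>c\<in>UNIV. p $ c) = 1" unfolding pc using Zp
    by (simp add: sum_divide_distrib[symmetric] Z_def)
  have lnq: "ln (p $ c / softmax z' $ c) = (z $ c - z' $ c) + ln (Z' / Z)" for c
  proof -
    have "p $ c / softmax z' $ c = exp (z $ c - z' $ c) * (Z' / Z)"
      using Zp Zp' by (simp add: pc qc exp_diff field_simps)
    moreover have "ln (exp (z $ c - z' $ c) * (Z' / Z)) = ln (exp (z $ c - z' $ c)) + ln (Z' / Z)"
      by (subst ln_mult) (use Zp Zp' in auto)
    ultimately show ?thesis by simp
  qed
  have "KL (softmax z) (softmax z') = (\<Sum>c\<in>UNIV. p $ c * (z $ c - z' $ c) + p $ c * ln (Z' / Z))"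
    unfolding KL_def p_def[symmetric]
  proof (intro sum.cong refl)
    fix c
    have "p $ c > 0" using Zp by (simp add: pc)
    then show "(if p $ c = 0 then 0 else p $ c * ln (p $ c / softmax z' $ c)) =
      p $ c * (z $ c - z' $ c) + p $ c * ln (Z' / Z)"
      by (simp only: lnq) (simp add: algebra_simps)
  qed
  also have "\<dots> = ln (Z' / Z) - (\<Sum>c\<in>UNIV. p $ c * d $ c)"
    by (simp add: sum.distrib sum_distrib_right[symmetric] p1 d_def algebra_simps sum_subtractf)
  also have "Z' / Z = (\<Sum>c\<in>UNIV. p $ c * exp (d $ c))"
    unfolding Z'_def sum_divide_distrib d_def
    by (intro sum.cong refl) (simp add: pc exp_diff)
  finally show ?thesis using lse_bound[OF p0 p1, of d] unfolding d_def by simp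
qed

lemma norm_transpose_le:
  fixes A :: "real^'c::finite^'y::finite"
  shows "norm (transpose A *v v) \<le> onorm (\<lambda>v. A *v v) * norm v"
proof -
  define w where "w = transpose A *v v"
  have "(norm w)\<^sup>2 = w \<bullet> w" by (simp add: power2_norm_eq_inner)
  also have "\<dots> = v \<bullet> (A *v w)" unfolding w_def transpose_matrix_vector dot_lmul_matrix ..
  also have "\<dots> \<le> norm v * norm (A *v w)" by (rule norm_cauchy_schwarz)
  also have "\<dots> \<le> norm v * (onorm (\<lambda>v. A *v v) * norm w)"
    using onorm[OF matrix_vector_mul_bounded_linear[of A], of w] by (intro mult_left_mono) auto
  finally have *: "norm w * norm w \<le> (onorm (\<lambda>v. A *v v) * norm v) * norm w"
    by (simp add: power2_eq_square algebra_simps)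
  show ?thesis
  proof (cases "norm w = 0")
    case True
    then show ?thesis unfolding w_def[symmetric]
      using onorm_pos_le[OF matrix_vector_mul_bounded_linear[of A]] by simp
  next
    case False
    then show ?thesis using * unfolding w_def[symmetric]
      by (simp add: mult_le_cancel_right)
  qed
qed

lemma nn_integral_cmult_le:
  fixes r :: real
  assumes "r \<ge> 0"
  shows "(\<integral>\<^sup>+ x. ennreal r * f x \<partial>M) \<le> ennreal r * integral\<^sup>N M f"
proof (cases "r = 0")
  case True then show ?thesis by simp
next
  case False
  then have rp: "r > 0" using assms by simp
  show ?thesis unfolding nn_integral_def[of M "\<lambda>x. ennreal r * f x"]
  proof (rule SUP_least, clarify)
    fix g assume g: "simple_function M g" "g \<le> (\<lambda>x. ennreal r * f x)"
    define g' where "g' = (\<lambda>x. ennreal (1/r) * g x)"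
    have sg': "simple_function M g'" unfolding g'_def using g(1) by auto
    have "g' \<le> f"
    proof (rule le_funI)
      fix x
      have "g' x \<le> ennreal (1/r) * (ennreal r * f x)"
        unfolding g'_def using g(2) by (intro mult_left_mono) (auto simp: le_fun_def)
      also have "\<dots> = f x" using rp
        by (simp add: mult.assoc[symmetric] ennreal_mult[symmetric])
      finally show "g' x \<le> f x" .
    qed
    then have "integral\<^sup>S M g' \<le> integral\<^sup>N M f"
      unfolding nn_integral_def using sg' by (intro SUP_upper) auto
    moreover have "integral\<^sup>S M g = ennreal r * integral\<^sup>S M g'"
    proof -
      have "integral\<^sup>S M g = integral\<^sup>S M (\<lambda>x. ennreal r * g' x)"
        unfolding g'_def using rp
        by (simp add: mult.assoc[symmetric] ennreal_mult[symmetric])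
      also have "\<dots> = ennreal r * integral\<^sup>S M g'" using sg' by (rule simple_integral_mult)
      finally show ?thesis .
    qed
    ultimately show "integral\<^sup>S M g \<le> ennreal r * integral\<^sup>N M f"
      by (simp add: mult_left_mono)
  qed
qed


theorem mainTheorem9:
  fixes px :: "'x measure"
    and f :: "'x \<Rightarrow> real^'m" and g :: "'y::finite \<Rightarrow> real^'m"
    and f' :: "'x \<Rightarrow> real^'m2" and g' :: "'y \<Rightarrow> real^'m2"
    and h :: "'x \<Rightarrow> real^'c::finite"
    and W :: "real^'c^'m" and b :: "real^'c"
    and A :: "real^'c^'y"
  assumes "prob_space px"
    and "in_Theta f g" and "in_Theta f' g'"
    and "rank (unembed g) = CARD('m)"
    and "CARD('c) \<ge> 2"
    and "\<forall>x. h x \<in> prob_simplex"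
    and "lin_encoded h f W b"
    and "W = unembed g ** A"
  shows "(INF W'b' \<in> (UNIV :: ((real^'c^'m2) \<times> (real^'c)) set).
            \<integral>\<^sup>+ x. ennreal (KL (h x) (softmax (transpose (fst W'b') *v f' x + snd W'b'))) \<partial>px)
         \<le> ennreal ((1/2) * (onorm (\<lambda>v. A *v v))\<^sup>2) * dlogit2 px f g f' g'"
proof -
  define W' where "W' = unembed g' ** A"
  define K where "K = onorm (\<lambda>v. A *v v)"
  have K0: "K \<ge> 0" unfolding K_def by (rule onorm_pos_le[OF matrix_vector_mul_bounded_linear])
  have pt: "KL (h x) (softmax (transpose W' *v f' x + b))
      \<le> (1/2) * K\<^sup>2 * (norm (logits f g x - logits f' g' x))\<^sup>2" for x
  proof -
    define z where "z = transpose A *v logits f g x + b"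
    define z' where "z' = transpose A *v logits f' g' x + b"
    have tW: "transpose W *v f x = transpose A *v logits f g x"
      unfolding assms(8) logits_def matrix_transpose_mul matrix_vector_mul_assoc ..
    have tW': "transpose W' *v f' x = transpose A *v logits f' g' x"
      unfolding W'_def logits_def matrix_transpose_mul matrix_vector_mul_assoc ..
    have hx: "h x = softmax z"
      using assms(7) unfolding lin_encoded_def softmax_def z_def tW[symmetric]
      by (simp add: vec_eq_iff)
    have dz: "z' - z = transpose A *v (logits f' g' x - logits f g x)"
      unfolding z_def z'_def by (simp add: matrix_vector_mult_diff_distrib)
    have n: "norm (z' - z) \<le> K * norm (logits f g x - logits f' g' x)"
      unfolding dz K_def using norm_transpose_le[of A "logits f' g' x - logits f g x"]
      by (simp only: norm_minus_commute[of "logits f' g' x"])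
    have "KL (h x) (softmax (transpose W' *v f' x + b)) = KL (softmax z) (softmax z')"
      unfolding hx tW' z'_def ..
    also have "\<dots> \<le> (norm (z' - z))\<^sup>2 / 2" by (rule kl_softmax)
    also have "\<dots> \<le> (K * norm (logits f g x - logits f' g' x))\<^sup>2 / 2"
      using n by (intro divide_right_mono power_mono) auto
    also have "\<dots> = (1/2) * K\<^sup>2 * (norm (logits f g x - logits f' g' x))\<^sup>2"
      by (simp add: power_mult_distrib)
    finally show ?thesis .
  qed
  have "(INF W'b' \<in> (UNIV :: ((real^'c^'m2) \<times> (real^'c)) set).
            \<integral>\<^sup>+ x. ennreal (KL (h x) (softmax (transpose (fst W'b') *v f' x + snd W'b'))) \<partial>px)
        \<le> \<integral>\<^sup>+ x. ennreal (KL (h x) (softmax (transpose W' *v f' x + b))) \<partial>px"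
    by (rule INF_lower2[of "(W', b)"]) auto
  also have "\<dots> \<le> \<integral>\<^sup>+ x. ennreal ((1/2) * K\<^sup>2) * ennreal ((norm (logits f g x - logits f' g' x))\<^sup>2) \<partial>px"
  proof (intro nn_integral_mono)
    fix x
    have "ennreal (KL (h x) (softmax (transpose W' *v f' x + b)))
        \<le> ennreal ((1/2) * K\<^sup>2 * (norm (logits f g x - logits f' g' x))\<^sup>2)"
      by (rule ennreal_leI) (rule pt)
    also have "\<dots> = ennreal ((1/2) * K\<^sup>2) * ennreal ((norm (logits f g x - logits f' g' x))\<^sup>2)"
      by (rule ennreal_mult) auto
    finally show "ennreal (KL (h x) (softmax (transpose W' *v f' x + b)))
        \<le> ennreal ((1/2) * K\<^sup>2) * ennreal ((norm (logits f g x - logits f' g' x))\<^sup>2)" .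
  qed
  also have "\<dots> \<le> ennreal ((1/2) * K\<^sup>2) * dlogit2 px f g f' g'"
    unfolding dlogit2_def by (rule nn_integral_cmult_le) simp
  finally show ?thesis unfolding K_def .
qed

end
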